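(* Let $\mathfrak g$ be a finite-dimensional real Lie algebra whose commutator ideal $[\mathfrak g,\mathfrak g]$ is one-dimensional. Then every complex structure on $\mathfrak g$ is abelian.
   Context: A complex structure on a real Lie algebra $\mathfrak g$ is a linear map $J$ with $J^2=-\mathrm{Id}$ and $J[x,y]-[Jx,y]-[x,Jy]-J[Jx,Jy]=0$ for all $x,y$; it is abelian if $[Jx,Jy]=[x,y]$ for all $x,y$. *)

theory Defs
  imports "HOL-Analysis.Analysis"
begin

definition lie_algebra :: "('a::real_vector \<Rightarrow> 'a \<Rightarrow> 'a) \<Rightarrow> bool" where
  "lie_algebra br \<longleftrightarrow> bilinear br \<and> (\<forall>x. br x x = 0) \<and>
     (\<forall>x y z. br x (br y z) + br y (br z x) + br z (br x y) = 0)"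

definition commutator_ideal :: "('a::real_vector \<Rightarrow> 'a \<Rightarrow> 'a) \<Rightarrow> 'a set" where
  "commutator_ideal br = span {br x y | x y. True}"

definition complex_structure :: "('a::real_vector \<Rightarrow> 'a \<Rightarrow> 'a) \<Rightarrow> ('a \<Rightarrow> 'a) \<Rightarrow> bool" where
  "complex_structure br J \<longleftrightarrow> linear J \<and> (\<forall>x. J (J x) = - x) \<and>
     (\<forall>x y. J (br x y) - br (J x) y - br x (J y) - J (br (J x) (J y)) = 0)"

definition abelian_complex_structure :: "('a::real_vector \<Rightarrow> 'a \<Rightarrow> 'a) \<Rightarrow> ('a \<Rightarrow> 'a) \<Rightarrow> bool" where
  "abelian_complex_structure br J \<longleftrightarrow> complex_structure br J \<and> (\<forall>x y. br (J x) (J y) = br x y)"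

end

theory Submission
  imports Defs
begin

theorem mainTheorem8:
  fixes br :: "'a::euclidean_space \<Rightarrow> 'a \<Rightarrow> 'a"
  assumes "lie_algebra br"
    and "dim (commutator_ideal br) = 1"
  shows "\<forall>J. complex_structure br J \<longrightarrow> abelian_complex_structure br J"
proof (intro allI impI)
  fix J assume cs: "complex_structure br J"
  have lin: "linear J" and JJ: "\<And>x. J (J x) = - x"
    and N: "\<And>x y. J (br x y) - br (J x) y - br x (J y) - J (br (J x) (J y)) = 0"
    using cs unfolding complex_structure_def by auto
  let ?C = "commutator_ideal br"
  have inC: "\<And>x y. br x y \<in> ?C"
    unfolding commutator_ideal_def by (rule span_base) blast
  have "br (J x) (J y) = br x y" for x y
  proof (rule ccontr)
    assume ne: "br (J x) (J y) \<noteq> br x y"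
    define w where "w = br x y - br (J x) (J y)"
    have w0: "w \<noteq> 0" using ne unfolding w_def by simp
    have wC: "w \<in> ?C" unfolding w_def commutator_ideal_def
      by (intro span_diff; rule span_base; blast)
    have Jw: "J w = br (J x) y + br x (J y)"
      using N[of x y] linear_diff[OF lin, of "br x y" "br (J x) (J y)"] unfolding w_def by (simp add: algebra_simps)
    have JwC: "J w \<in> ?C" unfolding Jw commutator_ideal_def
      by (intro span_add; rule span_base; blast)
    have "span {w} = span ?C"
      by (rule dim_eq_span) (use wC w0 assms(2) in auto)
    then have "span {w} = ?C" unfolding commutator_ideal_def by simp
    with JwC have "J w \<in> span {w}" by simp
    then obtain c where c: "J w = c *\<^sub>R w" by (auto simp: span_singleton)
    have "- w = J (J w)" using JJ by simp
    also have "\<dots> = c *\<^sub>R J w" using c linear_scale[OF lin] by simp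
    also have "\<dots> = (c * c) *\<^sub>R w" using c by simp
    finally have "(c * c + 1) *\<^sub>R w = 0" by (simp add: algebra_simps) (metis add.commute neg_eq_iff_add_eq_0)
    moreover have "c * c + 1 \<noteq> 0" by (metis add_nonneg_pos zero_le_square zero_less_one less_irrefl)
    ultimately show False using w0 by simp
  qed
  then show "abelian_complex_structure br J"
    unfolding abelian_complex_structure_def using cs by auto
qed

end
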